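(* For $K\ge 1$ let $\Theta_K$ denote the $(K-1)$-simplex and, for cell counts $N=(N_1,\ldots,N_K)$ of nonnegative integers, let the Dirichlet-DSM posterior be the random set $$\mathbf e_N(Z)=\{\theta\in\Theta_K:\ \theta_1\ge Z_1,\ldots,\theta_K\ge Z_K\},\qquad (Z_0,Z_1,\ldots,Z_K)\sim\mathrm{Dirichlet}(1,N_1,\ldots,N_K).$$ For an assertion $A\subseteq\Theta_K$ define $p=\Pr(\mathbf e_N(Z)\subseteq A)$, $q=\Pr(\mathbf e_N(Z)\subseteq A^c)$, $r=1-p-q$. Let $P=\{i_1,\ldots,i_L\}$ be any partition of $\{1,\ldots,K\}$ into $L$ nonempty blocks, and for $\theta\in\Theta_K$ define the aggregate $\tilde\theta\in\Theta_L$ by $\tilde\theta_\ell=\sum_{k\in i_\ell}\theta_k$; similarly $\tilde N_\ell=\sum_{k\in i_\ell}N_k$. Then the Dirichlet-DSM is representation invariant: for every partition $P$ and every assertion $\tilde A\subseteq\Theta_L$, the triple $(p,q,r)$ for the assertion $A=\{\theta\in\Theta_K:\tilde\theta\in\tilde A\}$ computed from the Dirichlet-DSM with counts $N$ equals the triple $(p,q,r)$ for $\tilde A$ computed from the Dirichlet-DSM on $\Theta_L$ with counts $\tilde N$.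
   Context: The Dirichlet distribution with some parameters equal to zero is understood in the degenerate sense: a coordinate whose parameter is $0$ equals $0$ almost surely. $A^c$ denotes the complement of $A$ in the relevant simplex. *)

theory Defs
  imports "HOL-Probability.Probability"
begin

text \<open>Gamma(n,1) distribution for a natural shape parameter n; shape 0 is the point mass at 0.
  For n \<ge> 1, Gamma(n,1) is the Erlang distribution with density x^(n-1) e^(-x)/(n-1)!.\<close>
definition gamma_nat :: "nat \<Rightarrow> real measure" where
  "gamma_nat n = (if n = 0 then return borel 0 else density lborel (erlang_density (n - 1) 1))"

definition dirichlet :: "nat \<Rightarrow> (nat \<Rightarrow> nat) \<Rightarrow> (nat \<Rightarrow> real) measure" where
  "dirichlet K alpha =
     distr (PiM {0..K} (\<lambda>i. gamma_nat (alpha i))) (PiM {0..K} (\<lambda>_. borel))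
       (\<lambda>g. restrict (\<lambda>i. g i / (\<Sum>j=0..K. g j)) {0..K})"

definition simplex_K :: "nat \<Rightarrow> (nat \<Rightarrow> real) set" where
  "simplex_K K = {t. (\<forall>i\<in>{1..K}. 0 \<le> t i) \<and> (\<Sum>i=1..K. t i) = 1 \<and> (\<forall>i. i \<notin> {1..K} \<longrightarrow> t i = 0)}"

definition dsm_set :: "nat \<Rightarrow> (nat \<Rightarrow> real) \<Rightarrow> (nat \<Rightarrow> real) set" where
  "dsm_set K Z = {t \<in> simplex_K K. \<forall>k\<in>{1..K}. Z k \<le> t k}"

definition dsm_law :: "nat \<Rightarrow> (nat \<Rightarrow> nat) \<Rightarrow> (nat \<Rightarrow> real) measure" where
  "dsm_law K N = dirichlet K (\<lambda>i. if i = 0 then 1 else N i)"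

definition dsm_p :: "nat \<Rightarrow> (nat \<Rightarrow> nat) \<Rightarrow> (nat \<Rightarrow> real) set \<Rightarrow> real" where
  "dsm_p K N A = measure (dsm_law K N) {Z \<in> space (dsm_law K N). dsm_set K Z \<subseteq> A}"

definition dsm_q :: "nat \<Rightarrow> (nat \<Rightarrow> nat) \<Rightarrow> (nat \<Rightarrow> real) set \<Rightarrow> real" where
  "dsm_q K N A = measure (dsm_law K N) {Z \<in> space (dsm_law K N). dsm_set K Z \<subseteq> simplex_K K - A}"

definition dsm_pqr :: "nat \<Rightarrow> (nat \<Rightarrow> nat) \<Rightarrow> (nat \<Rightarrow> real) set \<Rightarrow> real \<times> real \<times> real" where
  "dsm_pqr K N A = (dsm_p K N A, dsm_q K N A, 1 - dsm_p K N A - dsm_q K N A)"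

text \<open>Partition of {1..K} into L nonempty blocks, given by a block-label map b onto {1..L}
  (block i_l = {k \<in> {1..K}. b k = l}).\<close>
definition block :: "nat \<Rightarrow> (nat \<Rightarrow> nat) \<Rightarrow> nat \<Rightarrow> nat set" where
  "block K b l = {k \<in> {1..K}. b k = l}"

definition aggregate :: "nat \<Rightarrow> nat \<Rightarrow> (nat \<Rightarrow> nat) \<Rightarrow> (nat \<Rightarrow> 'a::comm_monoid_add) \<Rightarrow> nat \<Rightarrow> 'a" where
  "aggregate K L b x = (\<lambda>l. if l \<in> {1..L} then (\<Sum>k\<in>block K b l. x k) else 0)"

end

theory Submission
  imports Defs
begin

lemma sets_gamma_nat[simp, measurable_cong]: "sets (gamma_nat n) = sets borel"
  by (simp add: gamma_nat_def)

lemma space_gamma_nat[simp]: "space (gamma_nat n) = UNIV"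
  by (simp add: gamma_nat_def)

lemma prob_space_gamma_nat: "prob_space (gamma_nat n)"
  unfolding gamma_nat_def
  by (auto intro!: prob_space_return prob_space_erlang_density)

lemma AE_gamma0: "AE v in gamma_nat 0. v = (0::real)"
  unfolding gamma_nat_def apply simp
  apply (subst AE_return) apply auto done

lemma (in prob_space) gamma_conv:
  fixes X Y :: "'a \<Rightarrow> real"
  assumes ind: "indep_var borel X borel Y"
    and dX: "distr M borel X = gamma_nat a" and dY: "distr M borel Y = gamma_nat b"
  shows "distr M borel (\<lambda>x. X x + Y x) = gamma_nat (a + b)"
proof -
  have [measurable]: "X \<in> borel_measurable M" "Y \<in> borel_measurable M"
    using ind by (auto elim: indep_var_rv1 indep_var_rv2)
  show ?thesis
  proof (cases "a = 0 \<or> b = 0")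
    case True
    then show ?thesis
    proof
      assume a: "a = 0"
      have "AE v in distr M borel X. v = 0"
        unfolding dX a by (rule AE_gamma0)
      then have "AE x in M. X x = 0" by (subst (asm) AE_distr_iff) auto
      then have "distr M borel (\<lambda>x. X x + Y x) = distr M borel Y"
        by (intro distr_cong_AE) auto
      then show ?thesis using dY a by simp
    next
      assume a: "b = 0"
      have "AE v in distr M borel Y. v = 0"
        unfolding dY a by (rule AE_gamma0)
      then have "AE x in M. Y x = 0" by (subst (asm) AE_distr_iff) auto
      then have "distr M borel (\<lambda>x. X x + Y x) = distr M borel X"
        by (intro distr_cong_AE) auto
      then show ?thesis using dX a by simp
    qed
  next
    case False
    have eq: "distr M lborel Z = distr M borel Z" for Z :: "'a \<Rightarrow> real"
      by (rule distr_cong) auto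
    have "distributed M lborel X (erlang_density (a - 1) 1)"
      unfolding distributed_def using dX False by (auto simp: eq gamma_nat_def)
    moreover have "distributed M lborel Y (erlang_density (b - 1) 1)"
      unfolding distributed_def using dY False by (auto simp: eq gamma_nat_def)
    ultimately have "distributed M lborel (\<lambda>x. X x + Y x) (erlang_density (Suc (a - 1) + Suc (b - 1) - 1) 1)"
      by (intro sum_indep_erlang ind) auto
    moreover have "Suc (a - 1) + Suc (b - 1) - 1 = a + b - 1" using False by simp
    ultimately show ?thesis using False
      by (simp add: distributed_def eq gamma_nat_def)
  qed
qed



definition GG :: "nat set \<Rightarrow> (nat \<Rightarrow> nat) \<Rightarrow> (nat \<Rightarrow> real) measure" where
  "GG I \<alpha> = PiM I (\<lambda>i. gamma_nat (\<alpha> i))"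

lemma prob_space_GG: "prob_space (GG I \<alpha>)"
  unfolding GG_def by (intro prob_space_PiM prob_space_gamma_nat)

lemma sets_GG: "sets (GG I \<alpha>) = sets (PiM I (\<lambda>_. borel))"
  unfolding GG_def by (intro sets_PiM_cong) auto

lemma space_GG: "space (GG I \<alpha>) = PiE I (\<lambda>_. UNIV)"
  unfolding GG_def by (simp add: space_PiM)

lemma comp_meas: "i \<in> I \<Longrightarrow> (\<lambda>g. g i) \<in> borel_measurable (GG I \<alpha>)"
  using measurable_component_singleton[of i I "\<lambda>_. borel"]
  by (simp add: measurable_cong_sets[OF sets_GG refl])

lemma distr_comp_GG: "i \<in> I \<Longrightarrow> distr (GG I \<alpha>) borel (\<lambda>g. g i) = gamma_nat (\<alpha> i)"
proof -
  assume i: "i \<in> I"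
  have "distr (GG I \<alpha>) borel (\<lambda>g. g i) = distr (GG I \<alpha>) (gamma_nat (\<alpha> i)) (\<lambda>g. g i)"
    by (rule distr_cong) auto
  also have "\<dots> = gamma_nat (\<alpha> i)"
    unfolding GG_def using i by (intro distr_PiM_component prob_space_gamma_nat)
  finally show ?thesis .
qed

lemma indep_GG:
  assumes "I \<noteq> {}"
  shows "prob_space.indep_vars (GG I \<alpha>) (\<lambda>_. borel) (\<lambda>i g. g i) I"
proof -
  interpret prob_space "GG I \<alpha>" by (rule prob_space_GG)
  have "distr (GG I \<alpha>) (PiM I (\<lambda>_. borel)) (\<lambda>x. \<lambda>i\<in>I. x i) = distr (GG I \<alpha>) (GG I \<alpha>) (\<lambda>x. x)"
    by (rule distr_cong) (auto simp: sets_GG space_GG)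
  also have "\<dots> = GG I \<alpha>" by (rule distr_id2) simp
  also have "\<dots> = PiM I (\<lambda>i. distr (GG I \<alpha>) borel (\<lambda>x. x i))"
    unfolding GG_def[of I \<alpha>] by (intro PiM_cong refl) (simp add: distr_comp_GG[unfolded GG_def])
  finally show ?thesis
    using assms by (subst indep_vars_iff_distr_eq_PiM') (auto intro: comp_meas)
qed

lemma distr_sum_GG:
  assumes "finite J" "J \<subseteq> I"
  shows "distr (GG I \<alpha>) borel (\<lambda>g. \<Sum>j\<in>J. g j) = gamma_nat (\<Sum>j\<in>J. \<alpha> j)"
  using assms
proof (induction J rule: finite_induct)
  case empty
  interpret prob_space "GG I \<alpha>" by (rule prob_space_GG)
  show ?case by (simp add: gamma_nat_def)
next
  case (insert j J)
  interpret prob_space "GG I \<alpha>" by (rule prob_space_GG)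
  have "indep_vars (\<lambda>_. borel) (\<lambda>i g. g i) (insert j J)"
    using indep_GG[of I \<alpha>] insert.prems by (auto intro: indep_vars_subset)
  then have "indep_var borel (\<lambda>g. g j) borel (\<lambda>g. \<Sum>i\<in>J. g i)"
    using insert.hyps by (intro indep_vars_sum) auto
  then have "distr (GG I \<alpha>) borel (\<lambda>g. g j + (\<Sum>i\<in>J. g i)) = gamma_nat (\<alpha> j + (\<Sum>i\<in>J. \<alpha> i))"
    using insert by (intro gamma_conv distr_comp_GG) auto
  then show ?case using insert.hyps by simp
qed

lemma distr_blocks_GG:
  assumes Ls: "finite Ls" "Ls \<noteq> {}" and fin: "finite I" and I: "I \<noteq> {}" and B: "\<And>l. l \<in> Ls \<Longrightarrow> B l \<subseteq> I"
    and disj: "disjoint_family_on B Ls"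
  shows "distr (GG I \<alpha>) (PiM Ls (\<lambda>_. borel)) (\<lambda>g. \<lambda>l\<in>Ls. \<Sum>k\<in>B l. g k)
       = PiM Ls (\<lambda>l. gamma_nat (\<Sum>k\<in>B l. \<alpha> k))"
proof -
  interpret prob_space "GG I \<alpha>" by (rule prob_space_GG)
  have "indep_vars (\<lambda>l. PiM (B l) (\<lambda>_. borel)) (\<lambda>l g. restrict (\<lambda>i. g i) (B l)) Ls"
    using indep_vars_restrict[OF indep_GG[OF I] B disj] by simp
  then have "indep_vars (\<lambda>_. borel) (\<lambda>l g. (\<lambda>x. \<Sum>k\<in>B l. x k) (restrict (\<lambda>i. g i) (B l))) Ls"
    by (rule indep_vars_compose2) (auto intro!: borel_measurable_sum measurable_component_singleton)
  then have ind: "indep_vars (\<lambda>_. borel) (\<lambda>l g. \<Sum>k\<in>B l. g k) Ls"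
    by (rule indep_vars_cong[THEN iffD1, rotated -1]) auto
  have rv: "l \<in> Ls \<Longrightarrow> random_variable borel (\<lambda>g. \<Sum>k\<in>B l. g k)" for l
    using B by (auto intro!: borel_measurable_sum comp_meas)
  have "distr (GG I \<alpha>) (PiM Ls (\<lambda>_. borel)) (\<lambda>g. \<lambda>l\<in>Ls. \<Sum>k\<in>B l. g k)
      = PiM Ls (\<lambda>l. distr (GG I \<alpha>) borel (\<lambda>g. \<Sum>k\<in>B l. g k))"
    using ind Ls rv by (subst (asm) indep_vars_iff_distr_eq_PiM') auto
  also have "\<dots> = PiM Ls (\<lambda>l. gamma_nat (\<Sum>k\<in>B l. \<alpha> k))"
    using B fin by (intro PiM_cong refl distr_sum_GG) (auto intro: finite_subset)
  finally show ?thesis .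
qed



definition FF :: "nat \<Rightarrow> nat \<Rightarrow> (nat \<Rightarrow> nat) \<Rightarrow> (nat \<Rightarrow> real) \<Rightarrow> (nat \<Rightarrow> real)" where
  "FF K L b Z = (\<lambda>l\<in>{0..L}. if l = 0 then Z 0 else (\<Sum>k\<in>block K b l. max (Z k) 0))"

lemma block_sub: "block K b l \<subseteq> {1..K}" by (auto simp: block_def)
lemma finite_block[simp]: "finite (block K b l)" by (rule finite_subset[OF block_sub]) auto

lemma sum_blocks:
  assumes part: "b ` {1..K} = {1..L}"
  shows "(\<Sum>l=1..L. \<Sum>k\<in>block K b l. t k) = (\<Sum>k=1..K. t k)"
proof -
  have "(\<Sum>l=1..L. \<Sum>k\<in>{x\<in>{1..K}. b x = l}. t k) = (\<Sum>k=1..K. t k)"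
    by (rule sum.group) (use part in auto)
  then show ?thesis by (simp add: block_def)
qed

lemma agg_img:
  assumes part: "b ` {1..K} = {1..L}"
  shows "aggregate K L b ` dsm_set K Z = dsm_set L (FF K L b Z)"
proof
  show "aggregate K L b ` dsm_set K Z \<subseteq> dsm_set L (FF K L b Z)"
  proof
    fix p assume "p \<in> aggregate K L b ` dsm_set K Z"
    then obtain t where t: "t \<in> dsm_set K Z" and p: "p = aggregate K L b t" by blast
    have t0: "\<forall>i\<in>{1..K}. 0 \<le> t i" "(\<Sum>i=1..K. t i) = 1" "\<forall>i. i \<notin> {1..K} \<longrightarrow> t i = 0"
      and tZ: "\<forall>k\<in>{1..K}. Z k \<le> t k"
      using t by (auto simp: dsm_set_def simplex_K_def)
    have nn: "0 \<le> (\<Sum>k\<in>block K b l. t k)" for l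
      using t0 block_sub by (intro sum_nonneg) auto
    have ge: "(\<Sum>k\<in>block K b l. max (Z k) 0) \<le> (\<Sum>k\<in>block K b l. t k)" for l
      using t0 tZ block_sub by (intro sum_mono) (auto simp: subset_iff)
    have "(\<Sum>l=1..L. p l) = (\<Sum>l=1..L. \<Sum>k\<in>block K b l. t k)"
      unfolding p aggregate_def by (intro sum.cong) auto
    also have "\<dots> = 1" using sum_blocks[OF part, of t] t0(2) by argo
    finally show "p \<in> dsm_set L (FF K L b Z)"
      unfolding dsm_set_def simplex_K_def p using nn ge
      by (auto simp: aggregate_def FF_def)
  qed
next
  show "dsm_set L (FF K L b Z) \<subseteq> aggregate K L b ` dsm_set K Z"
  proof
    fix p assume pin: "p \<in> dsm_set L (FF K L b Z)"
    have p0: "\<forall>i\<in>{1..L}. 0 \<le> p i" "(\<Sum>i=1..L. p i) = 1" "\<forall>i. i \<notin> {1..L} \<longrightarrow> p i = 0"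
      and pZ: "\<forall>l\<in>{1..L}. (\<Sum>k\<in>block K b l. max (Z k) 0) \<le> p l"
      using pin by (auto simp: dsm_set_def simplex_K_def FF_def)
    define rep where "rep l = (SOME k. k \<in> block K b l)" for l
    have rep: "rep l \<in> block K b l" if "l \<in> {1..L}" for l
    proof -
      from that part obtain k where "k \<in> {1..K}" "b k = l" by (metis imageE)
      then have "k \<in> block K b l" by (simp add: block_def)
      then show ?thesis unfolding rep_def by (rule someI)
    qed
    define c where "c l = p l - (\<Sum>k\<in>block K b l. max (Z k) 0)" for l
    define t where "t k = (if k \<in> {1..K} then max (Z k) 0 + (if k = rep (b k) then c (b k) else 0) else 0)" for k
    have bk: "b k \<in> {1..L}" if "k \<in> {1..K}" for k using part that by auto
    have c0: "l \<in> {1..L} \<Longrightarrow> 0 \<le> c l" for l using pZ by (auto simp: c_def)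
    have tb: "(\<Sum>k\<in>block K b l. t k) = p l" if l: "l \<in> {1..L}" for l
    proof -
      have "(\<Sum>k\<in>block K b l. t k) = (\<Sum>k\<in>block K b l. max (Z k) 0 + (if k = rep l then c l else 0))"
        by (intro sum.cong) (auto simp: t_def block_def)
      also have "\<dots> = (\<Sum>k\<in>block K b l. max (Z k) 0) + c l"
        using rep[OF l] by (simp add: sum.distrib)
      finally show ?thesis by (simp add: c_def)
    qed
    have agg: "aggregate K L b t = p"
    proof
      fix l show "aggregate K L b t l = p l"
        using tb p0 by (auto simp: aggregate_def)
    qed
    have "t \<in> dsm_set K Z"
    proof -
      have "(\<Sum>k=1..K. t k) = (\<Sum>l=1..L. \<Sum>k\<in>block K b l. t k)" by (rule sum_blocks[OF part, symmetric])
      also have "\<dots> = (\<Sum>l=1..L. p l)" using tb by simp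
      finally have s1: "(\<Sum>k=1..K. t k) = 1" using p0 by simp
      have tge: "max (Z k) 0 \<le> t k" if "k \<in> {1..K}" for k
      proof -
        have "0 \<le> c (b k)" using c0 bk that by blast
        then show ?thesis using that by (auto simp: t_def)
      qed
      have "0 \<le> t k" for k using tge by (cases "k \<in> {1..K}") (force simp: t_def)+
      moreover have "Z k \<le> t k" if "k \<in> {1..K}" for k using tge[OF that] by linarith
      moreover have "\<forall>i. i \<notin> {1..K} \<longrightarrow> t i = 0" by (simp add: t_def)
      ultimately show ?thesis using s1 unfolding dsm_set_def simplex_K_def by blast
    qed
    then show "p \<in> aggregate K L b ` dsm_set K Z" using agg by blast
  qed
qed



lemma AE_gamma_nonneg: "AE x in gamma_nat n. 0 \<le> (x::real)"
proof (cases "n = 0")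
  case True
  then show ?thesis unfolding gamma_nat_def by (simp add: AE_return)
next
  case False
  then show ?thesis unfolding gamma_nat_def
    apply simp
    by (subst AE_density) (auto simp: erlang_density_def)
qed

lemma AE_GG_nonneg: "finite I \<Longrightarrow> AE g in GG I \<alpha>. \<forall>i\<in>I. 0 \<le> g i"
  unfolding GG_def
  by (intro AE_finite_allI AE_PiM_component[where P="\<lambda>x. 0 \<le> x"] prob_space_gamma_nat AE_gamma_nonneg)

lemma meas_norm: "(\<lambda>g::nat\<Rightarrow>real. \<lambda>i\<in>{0..K}. g i / (\<Sum>j=0..K. g j)) \<in> measurable (PiM {0..K} (\<lambda>_. borel)) (PiM {0..K} (\<lambda>_. borel))"
proof (intro measurable_restrict)
  fix i assume i: "i \<in> {0..K}"
  have s: "(\<lambda>x. \<Sum>j\<in>{0..K}. x j) \<in> borel_measurable (PiM {0..K} (\<lambda>_. borel :: real measure))"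
    by (intro borel_measurable_sum) (rule measurable_component_singleton, auto)
  show "(\<lambda>x. x i / (\<Sum>j=0..K. x j)) \<in> borel_measurable (PiM {0..K} (\<lambda>_. borel :: real measure))"
    by (rule borel_measurable_divide[OF measurable_component_singleton[OF i] s])
qed

lemma meas_FF: "FF K L b \<in> measurable (PiM {0..K} (\<lambda>_. borel)) (PiM {0..L} (\<lambda>_. borel))"
  unfolding FF_def
proof (intro measurable_restrict)
  fix l assume "l \<in> {0..L}"
  have "(\<lambda>Z. \<Sum>k\<in>block K b l. max (Z k) 0) \<in> borel_measurable (PiM {0..K} (\<lambda>_. borel :: real measure))"
  proof (intro borel_measurable_sum)
    fix k assume "k \<in> block K b l"
    then have k: "k \<in> {0..K}" using block_sub by fastforce
    show "(\<lambda>Z. max (Z k) 0) \<in> borel_measurable (PiM {0..K} (\<lambda>_. borel :: real measure))"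
      using measurable_component_singleton[OF k, of "\<lambda>_. borel :: real measure"] by measurable
  qed
  moreover have "(\<lambda>Z. Z 0) \<in> borel_measurable (PiM {0..K} (\<lambda>_. borel :: real measure))"
    by (rule measurable_component_singleton) auto
  ultimately show "(\<lambda>Z::nat\<Rightarrow>real. if l = 0 then Z 0 else \<Sum>k\<in>block K b l. max (Z k) 0) \<in> borel_measurable (PiM {0..K} (\<lambda>_. borel))"
    by (cases "l = 0") auto
qed

lemma sets_dsm_law: "sets (dsm_law K N) = sets (PiM {0..K} (\<lambda>_. borel))"
  by (simp add: dsm_law_def dirichlet_def)

lemma space_dsm_law: "space (dsm_law K N) = PiE {0..K} (\<lambda>_. UNIV)"
  by (simp add: dsm_law_def dirichlet_def space_PiM)

lemma law_agg:
  assumes part: "b ` {1..K} = {1..L}"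
  shows "distr (dsm_law K N) (PiM {0..L} (\<lambda>_. borel)) (FF K L b) = dsm_law L (aggregate K L b N)"
proof -
  define \<alpha> where "\<alpha> i = (if i = 0 then 1 else N i)" for i
  define \<alpha>' where "\<alpha>' i = (if i = 0 then 1 else aggregate K L b N i)" for i
  define B where "B l = (if l = 0 then {0} else block K b l)" for l
  define normK where "normK g = (\<lambda>i\<in>{0..K}. g i / (\<Sum>j=0..K. g j))" for g :: "nat \<Rightarrow> real"
  define normL where "normL g = (\<lambda>i\<in>{0..L}. g i / (\<Sum>j=0..L. g j))" for g :: "nat \<Rightarrow> real"
  define Yv where "Yv g = (\<lambda>l\<in>{0..L}. \<Sum>k\<in>B l. g k)" for g :: "nat \<Rightarrow> real"
  let ?PK = "PiM {0..K} (\<lambda>_. borel :: real measure)"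
  let ?PL = "PiM {0..L} (\<lambda>_. borel :: real measure)"
  have dsmK: "dsm_law K N = distr (GG {0..K} \<alpha>) ?PK normK"
    unfolding dsm_law_def dirichlet_def GG_def normK_def \<alpha>_def ..
  have dsmL: "dsm_law L (aggregate K L b N) = distr (GG {0..L} \<alpha>') ?PL normL"
    unfolding dsm_law_def dirichlet_def GG_def normL_def \<alpha>'_def ..
  have Bsub: "B l \<subseteq> {0..K}" for l using block_sub[of K b l] by (auto simp: B_def)
  have disj: "disjoint_family_on B {0..L}"
    unfolding disjoint_family_on_def B_def block_def by auto
  have GL: "distr (GG {0..K} \<alpha>) ?PL Yv = GG {0..L} \<alpha>'"
  proof -
    have "distr (GG {0..K} \<alpha>) ?PL Yv = PiM {0..L} (\<lambda>l. gamma_nat (\<Sum>k\<in>B l. \<alpha> k))"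
      unfolding Yv_def by (rule distr_blocks_GG) (use Bsub disj in auto)
    also have "\<dots> = GG {0..L} \<alpha>'"
      unfolding GG_def
    proof (intro PiM_cong refl)
      fix l assume "l \<in> {0..L}"
      have "(\<Sum>k\<in>B l. \<alpha> k) = \<alpha>' l"
      proof (cases "l = 0")
        case True then show ?thesis by (simp add: B_def \<alpha>_def \<alpha>'_def)
      next
        case False
        then have "(\<Sum>k\<in>B l. \<alpha> k) = (\<Sum>k\<in>block K b l. N k)"
          unfolding B_def \<alpha>_def by (intro sum.cong) (auto simp: block_def)
        then show ?thesis using False \<open>l \<in> {0..L}\<close> by (simp add: \<alpha>'_def aggregate_def)
      qed
      then show "gamma_nat (\<Sum>k\<in>B l. \<alpha> k) = gamma_nat (\<alpha>' l)" by simp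
    qed
    finally show ?thesis .
  qed
  have mnK: "normK \<in> measurable (GG {0..K} \<alpha>) ?PK"
    using meas_norm[of K] unfolding normK_def by (simp add: measurable_cong_sets[OF sets_GG refl])
  have mnL: "normL \<in> measurable ?PL ?PL"
    using meas_norm[of L] unfolding normL_def .
  have mY: "Yv \<in> measurable (GG {0..K} \<alpha>) ?PL"
    unfolding Yv_def measurable_cong_sets[OF sets_GG refl]
    by (intro measurable_restrict borel_measurable_sum measurable_component_singleton) (use Bsub in fastforce)+
  have mF: "FF K L b \<in> measurable ?PK ?PL" by (rule meas_FF)
  have lhs: "distr (dsm_law K N) ?PL (FF K L b) = distr (GG {0..K} \<alpha>) ?PL (FF K L b \<circ> normK)"
    unfolding dsmK by (rule distr_distr[OF mF mnK])
  have rhs: "dsm_law L (aggregate K L b N) = distr (GG {0..K} \<alpha>) ?PL (normL \<circ> Yv)"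
    unfolding dsmL GL[symmetric] by (rule distr_distr[OF mnL mY])
  have pw: "(FF K L b \<circ> normK) g = (normL \<circ> Yv) g" if nn: "\<forall>i\<in>{0..K}. 0 \<le> g i" for g
  proof -
    define S where "S = (\<Sum>j=0..K. g j)"
    have S0: "0 \<le> S" unfolding S_def using nn by (intro sum_nonneg) auto
    have SS: "(\<Sum>l=0..L. \<Sum>k\<in>B l. g k) = S"
    proof -
      have "(\<Sum>l\<in>{0..L}. \<Sum>k\<in>{x\<in>{0..K}. (if x = 0 then 0 else b x) = l}. g k) = (\<Sum>k\<in>{0..K}. g k)"
        by (rule sum.group) (use part in auto)
      moreover have "{x\<in>{0..K}. (if x = 0 then 0 else b x) = l} = B l" if "l \<in> {0..L}" for l
      proof -
        have "b x \<noteq> 0" if "x \<in> {1..K}" for x using part that by force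
        then show ?thesis unfolding B_def block_def
          by (cases "l = 0") (auto simp: Suc_le_eq; metis neq0_conv less_irrefl)+
      qed
      ultimately show ?thesis unfolding S_def by simp
    qed
    show ?thesis
    proof
      fix l
      show "(FF K L b \<circ> normK) g l = (normL \<circ> Yv) g l"
      proof (cases "l \<in> {0..L}")
        case False then show ?thesis by (simp add: FF_def normL_def)
      next
        case True
        have sL: "(\<Sum>j=0..L. Yv g j) = S" using SS by (simp add: Yv_def)
        show ?thesis
        proof (cases "l = 0")
          case True
          then show ?thesis using sL by (simp add: FF_def normL_def normK_def Yv_def B_def S_def)
        next
          case False
          have "(\<Sum>k\<in>block K b l. max (normK g k) 0) = (\<Sum>k\<in>block K b l. g k / S)"
          proof (intro sum.cong refl)
            fix k assume "k \<in> block K b l"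
            then have k: "k \<in> {0..K}" using block_sub by fastforce
            then show "max (normK g k) 0 = g k / S" using nn S0
              by (simp add: normK_def S_def)
          qed
          also have "\<dots> = (\<Sum>k\<in>block K b l. g k) / S" by (simp add: sum_divide_distrib)
          finally show ?thesis using False True sL by (simp add: FF_def normL_def Yv_def B_def)
        qed
      qed
    qed
  qed
  have "distr (GG {0..K} \<alpha>) ?PL (FF K L b \<circ> normK) = distr (GG {0..K} \<alpha>) ?PL (normL \<circ> Yv)"
  proof (rule distr_cong_AE)
    show "AE g in GG {0..K} \<alpha>. (FF K L b \<circ> normK) g = (normL \<circ> Yv) g"
      by (rule AE_mp[OF AE_GG_nonneg[of "{0..K}" \<alpha>]]) (use pw in auto)
  qed (auto intro: measurable_comp mF mnK mnL mY)
  then show ?thesis using lhs rhs by simp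
qed


theorem theorem4:
  fixes K L :: nat and N :: "nat \<Rightarrow> nat" and b :: "nat \<Rightarrow> nat"
    and At :: "(nat \<Rightarrow> real) set"
  assumes "1 \<le> K"
    and partition: "b ` {1..K} = {1..L}"
    and At_sub: "At \<subseteq> simplex_K L"
    and meas_p: "{Z \<in> space (dsm_law L (aggregate K L b N)). dsm_set L Z \<subseteq> At}
                   \<in> sets (dsm_law L (aggregate K L b N))"
    and meas_q: "{Z \<in> space (dsm_law L (aggregate K L b N)). dsm_set L Z \<subseteq> simplex_K L - At}
                   \<in> sets (dsm_law L (aggregate K L b N))"
  shows "dsm_pqr K N {t \<in> simplex_K K. aggregate K L b t \<in> At}
       = dsm_pqr L (aggregate K L b N) At"
proof -
  define A where "A = {t \<in> simplex_K K. aggregate K L b t \<in> At}"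
  let ?NL = "aggregate K L b N"
  let ?PL = "PiM {0..L} (\<lambda>_. borel :: real measure)"
  have img: "aggregate K L b ` dsm_set K Z = dsm_set L (FF K L b Z)" for Z
    by (rule agg_img[OF partition])
  have sub: "dsm_set K Z \<subseteq> simplex_K K" "dsm_set L W \<subseteq> simplex_K L" for Z W
    by (auto simp: dsm_set_def)
  have eqp: "dsm_set K Z \<subseteq> A \<longleftrightarrow> dsm_set L (FF K L b Z) \<subseteq> At" for Z
  proof -
    have "dsm_set K Z \<subseteq> A \<longleftrightarrow> aggregate K L b ` dsm_set K Z \<subseteq> At"
      using sub(1)[of Z] unfolding A_def by blast
    then show ?thesis by (simp only: img)
  qed
  have eqq: "dsm_set K Z \<subseteq> simplex_K K - A \<longleftrightarrow> dsm_set L (FF K L b Z) \<subseteq> simplex_K L - At" for Z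
  proof -
    have "dsm_set K Z \<subseteq> simplex_K K - A \<longleftrightarrow> aggregate K L b ` dsm_set K Z \<inter> At = {}"
      using sub(1)[of Z] unfolding A_def by blast
    also have "\<dots> \<longleftrightarrow> dsm_set L (FF K L b Z) \<subseteq> simplex_K L - At"
      using sub(2)[of "FF K L b Z"] by (simp only: img) blast
    finally show ?thesis .
  qed
  have FFsp: "FF K L b Z \<in> space (dsm_law L ?NL)" for Z
    by (simp add: space_dsm_law FF_def)
  have mF: "FF K L b \<in> measurable (dsm_law K N) ?PL"
    using meas_FF by (simp add: measurable_cong_sets[OF sets_dsm_law refl])
  have law: "distr (dsm_law K N) ?PL (FF K L b) = dsm_law L ?NL"
    by (rule law_agg[OF partition])
  have gen: "measure (dsm_law K N) {Z \<in> space (dsm_law K N). P (dsm_set L (FF K L b Z))}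
      = measure (dsm_law L ?NL) {W \<in> space (dsm_law L ?NL). P (dsm_set L W)}"
    if S: "{W \<in> space (dsm_law L ?NL). P (dsm_set L W)} \<in> sets (dsm_law L ?NL)" for P
  proof -
    let ?S = "{W \<in> space (dsm_law L ?NL). P (dsm_set L W)}"
    have S': "?S \<in> sets ?PL" using S by (simp add: sets_dsm_law)
    have "{Z \<in> space (dsm_law K N). P (dsm_set L (FF K L b Z))} = FF K L b -` ?S \<inter> space (dsm_law K N)"
      using FFsp by auto
    then have "measure (dsm_law K N) {Z \<in> space (dsm_law K N). P (dsm_set L (FF K L b Z))}
        = measure (distr (dsm_law K N) ?PL (FF K L b)) ?S"
      by (simp add: measure_distr[OF mF S'])
    then show ?thesis using law by simp
  qed
  have p: "dsm_p K N A = dsm_p L ?NL At"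
    unfolding dsm_p_def eqp using gen[of "\<lambda>X. X \<subseteq> At"] meas_p by simp
  have q: "dsm_q K N A = dsm_q L ?NL At"
    unfolding dsm_q_def eqq using gen[of "\<lambda>X. X \<subseteq> simplex_K L - At"] meas_q by simp
  show ?thesis
    unfolding A_def[symmetric] dsm_pqr_def p q ..
qed

end
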